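(* Let $A$ be associative and let $f,g\in\mathcal{S}(\Omega)$. If $x\in\Omega$ is real and $x\in V(f)\cup V(g)$, then $x\in V(f\cdot g)$. More generally: (1) If $\mathbb{S}_x\subseteq V(f)$ or $\mathbb{S}_x\subseteq V(g)$, then $\mathbb{S}_x\subseteq V(f\cdot g)$. If $x\in\Omega\setminus\mathbb{R}$ and $f'_s(x)$, $g'_s(x)$ and $(f\cdot g)'_s(x)$ belong to $C_A$, then: (2) If $\mathbb{S}_x\cap V(f)=\{y\}$ and $\mathbb{S}_x\cap V(g)=\emptyset$, then $\mathbb{S}_x\cap V(f\cdot g)=\{y\}$. (3) If $\mathbb{S}_x\cap V(f)=\emptyset$ and $\mathbb{S}_x\cap V(g)=\{z\}$, then $f^c(z)\in C_A\setminus\{0\}$ and $\mathbb{S}_x\cap V(f\cdot g)=\{f^c(z)^{-1}zf^c(z)\}$. (4) If $\mathbb{S}_x\cap V(f)=\{y\}$ and $\mathbb{S}_x\cap V(g)=\{z\}$, then either (a) $\mathbb{S}_x\subseteq V(f\cdot g)$, or (b) $\mathbb{S}_x\cap V(f\cdot g)=\{y\}$, depending on whether or not $y^cf'_s(x)=f'_s(x)z$.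
   Context: Let $A$ be a finite-dimensional associative real algebra with unit $1$ ($\mathbb{R}$ identified with $\mathbb{R}1$), with a $^*$-involution $x\mapsto x^c$ (real linear, $(x^c)^c=x$, $(xy)^c=y^cx^c$, $r^c=r$ for $r\in\mathbb{R}$). Let $t(x)=x+x^c$, $n(x)=xx^c$. $C_A=\{0\}\cup\{a:n(a),n(a^c)$ are invertible elements of the center of $A\}$. $\mathbb{S}_A=\{J\in A:t(J)=0,n(J)=1\}$ (assumed non-empty), $Q_A=\mathbb{R}\cup\{x:t(x),n(x)\in\mathbb{R},4n(x)>t(x)^2\}$; every $x\in Q_A$ is $\alpha+\beta J$ with $\alpha,\beta\in\mathbb{R}$, $J\in\mathbb{S}_A$; $x^c=\alpha-\beta J$, $\mathrm{im}(x)=x-t(x)/2$, $\mathbb{S}_x=\{\alpha+\beta I:I\in\mathbb{S}_A\}$. Let $D\subseteq\mathbb{C}$ be non-empty, invariant under conjugation, $\Omega=\{\alpha+\beta J:\alpha+i\beta\in D,J\in\mathbb{S}_A\}$. $A_{\mathbb{C}}=\{a+\imath b\}$ with $(a+\imath b)(a'+\imath b')=aa'-bb'+\imath(ab'+ba')$, $\overline{a+\imath b}=a-\imath b$, $(a+\imath b)^c=a^c+\imath b^c$. A stem function $F=F_1+\imath F_2:D\to A_{\mathbb{C}}$ satisfies $F(\bar z)=\overline{F(z)}$ and induces the slice function $f=\mathcal{I}(F)$, $f(\alpha+\beta J)=F_1(\alpha+i\beta)+JF_2(\alpha+i\beta)$; $\mathcal{S}(\Omega)$ is the set of slice functions; slice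 product $f\cdot g=\mathcal{I}(FG)$; $f^c=\mathcal{I}(F^c)$ with $F^c(z)=F(z)^c$. $V(h)=\{x:h(x)=0\}$. $f'_s(x)=\frac12\mathrm{im}(x)^{-1}(f(x)-f(x^c))$ for $x\in\Omega\setminus\mathbb{R}$. *)

theory Defs
  imports Complex_Main
begin

text \<open>A finite-dimensional associative real algebra with unit is modelled as a type of
  class real_algebra_1 (associative ring with unit, compatible real scalar multiplication,
  reals embedded via of_real) together with finite dimensionality.
  The star-involution is an explicit parameter cj.\<close>

definition fin_dim_alg :: "'a::real_algebra_1 itself \<Rightarrow> bool" where
  "fin_dim_alg _ \<longleftrightarrow> (\<exists>B::'a set. finite B \<and> span B = UNIV)"

definition star_involution :: "('a::real_algebra_1 \<Rightarrow> 'a) \<Rightarrow> bool" where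
  "star_involution cj \<longleftrightarrow>
     (\<forall>x y. cj (x + y) = cj x + cj y) \<and>
     (\<forall>r x. cj (r *\<^sub>R x) = r *\<^sub>R cj x) \<and>
     (\<forall>x. cj (cj x) = x) \<and>
     (\<forall>x y. cj (x * y) = cj y * cj x) \<and>
     (\<forall>r. cj (of_real r) = of_real r)"

definition tr :: "('a::real_algebra_1 \<Rightarrow> 'a) \<Rightarrow> 'a \<Rightarrow> 'a" where
  "tr cj x = x + cj x"

definition nrm :: "('a::real_algebra_1 \<Rightarrow> 'a) \<Rightarrow> 'a \<Rightarrow> 'a" where
  "nrm cj x = x * cj x"

definition center :: "'a::real_algebra_1 set" where
  "center = {z. \<forall>y. z * y = y * z}"

definition invertible_el :: "'a::real_algebra_1 \<Rightarrow> bool" where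
  "invertible_el a \<longleftrightarrow> (\<exists>b. a * b = 1 \<and> b * a = 1)"

definition inv_el :: "'a::real_algebra_1 \<Rightarrow> 'a" where
  "inv_el a = (THE b. a * b = 1 \<and> b * a = 1)"

definition CA :: "('a::real_algebra_1 \<Rightarrow> 'a) \<Rightarrow> 'a set" where
  "CA cj = {0} \<union> {a. nrm cj a \<in> center \<and> invertible_el (nrm cj a)
                    \<and> nrm cj (cj a) \<in> center \<and> invertible_el (nrm cj (cj a))}"

definition SA :: "('a::real_algebra_1 \<Rightarrow> 'a) \<Rightarrow> 'a set" where
  "SA cj = {J. tr cj J = 0 \<and> nrm cj J = 1}"

definition Omega :: "('a::real_algebra_1 \<Rightarrow> 'a) \<Rightarrow> complex set \<Rightarrow> 'a set" where
  "Omega cj D = {of_real (Re z) + Im z *\<^sub>R J | z J. z \<in> D \<and> J \<in> SA cj}"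

definition Sx :: "('a::real_algebra_1 \<Rightarrow> 'a) \<Rightarrow> 'a \<Rightarrow> 'a set" where
  "Sx cj x = {y. \<exists>\<alpha> \<beta> J I. J \<in> SA cj \<and> I \<in> SA cj \<and>
                  x = of_real \<alpha> + \<beta> *\<^sub>R J \<and> y = of_real \<alpha> + \<beta> *\<^sub>R I}"

definition im_part :: "('a::real_algebra_1 \<Rightarrow> 'a) \<Rightarrow> 'a \<Rightarrow> 'a" where
  "im_part cj x = x - (1/2) *\<^sub>R tr cj x"

text \<open>Elements of the complexification A_C = A + i A are represented as pairs (a, b).\<close>
definition acmult :: "'a::real_algebra_1 \<times> 'a \<Rightarrow> 'a \<times> 'a \<Rightarrow> 'a \<times> 'a" where
  "acmult p q = (fst p * fst q - snd p * snd q, fst p * snd q + snd p * fst q)"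

definition is_stem :: "complex set \<Rightarrow> (complex \<Rightarrow> 'a::real_algebra_1 \<times> 'a) \<Rightarrow> bool" where
  "is_stem D F \<longleftrightarrow> (\<forall>z\<in>D. F (cnj z) = (fst (F z), - snd (F z)))"

definition slice :: "('a::real_algebra_1 \<Rightarrow> 'a) \<Rightarrow> (complex \<Rightarrow> 'a \<times> 'a) \<Rightarrow> 'a \<Rightarrow> 'a" where
  "slice cj F x = (SOME v. \<exists>\<alpha> \<beta> J. J \<in> SA cj \<and> x = of_real \<alpha> + \<beta> *\<^sub>R J \<and>
                     v = fst (F (Complex \<alpha> \<beta>)) + J * snd (F (Complex \<alpha> \<beta>)))"

definition stem_prod :: "(complex \<Rightarrow> 'a::real_algebra_1 \<times> 'a) \<Rightarrow> (complex \<Rightarrow> 'a \<times> 'a) \<Rightarrow> complex \<Rightarrow> 'a \<times> 'a" where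
  "stem_prod F G z = acmult (F z) (G z)"

definition stem_cj :: "('a::real_algebra_1 \<Rightarrow> 'a) \<Rightarrow> (complex \<Rightarrow> 'a \<times> 'a) \<Rightarrow> complex \<Rightarrow> 'a \<times> 'a" where
  "stem_cj cj F z = (cj (fst (F z)), cj (snd (F z)))"

definition zeros :: "'a set \<Rightarrow> ('a \<Rightarrow> 'a::zero) \<Rightarrow> 'a set" where
  "zeros \<Omega> h = {x \<in> \<Omega>. h x = 0}"

definition sph_deriv :: "('a::real_algebra_1 \<Rightarrow> 'a) \<Rightarrow> ('a \<Rightarrow> 'a) \<Rightarrow> 'a \<Rightarrow> 'a" where
  "sph_deriv cj f x = (1/2) *\<^sub>R (inv_el (im_part cj x) * (f x - f (cj x)))"

end

theory Submission imports Defs begin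

context fixes cj :: "'a::real_algebra_1 \<Rightarrow> 'a" assumes inv: "star_involution cj"
begin
lemma cj_add[simp]: "cj (x + y) = cj x + cj y" using inv by (simp add: star_involution_def)
lemma cj_scale[simp]: "cj (r *\<^sub>R x) = r *\<^sub>R cj x" using inv by (simp add: star_involution_def)
lemma cj_cj[simp]: "cj (cj x) = x" using inv by (simp add: star_involution_def)
lemma cj_mult[simp]: "cj (x * y) = cj y * cj x" using inv by (simp add: star_involution_def)
lemma cj_of_real[simp]: "cj (of_real r) = of_real r" using inv by (simp add: star_involution_def)
lemma cj_one[simp]: "cj 1 = 1" using cj_of_real[of 1] by simp
lemma cj_zero[simp]: "cj 0 = 0" using cj_of_real[of 0] by simp
lemma cj_minus[simp]: "cj (- x) = - cj x" using cj_scale[of "-1" x] by simp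
lemma cj_diff[simp]: "cj (x - y) = cj x - cj y" using cj_add[of x "-y"] by simp

lemma SA_cj: assumes "J \<in> SA cj" shows "cj J = - J"
proof -
  have "J + cj J = 0" using assms unfolding SA_def tr_def by blast
  from minus_unique[OF this] show ?thesis by simp
qed
lemma SA_sq: assumes J: "J \<in> SA cj" shows "J * J = - 1"
proof -
  have "J * cj J = 1" using J unfolding SA_def nrm_def by blast
  thus ?thesis unfolding SA_cj[OF J] by (metis minus_minus mult_minus_right)
qed
lemma SA_neg: assumes J: "J \<in> SA cj" shows "- J \<in> SA cj"
proof -
  have a: "cj (- J) = J" using SA_cj[OF J] by simp
  have b: "- J * J = 1" using SA_sq[OF J] by simp
  show ?thesis unfolding SA_def tr_def nrm_def using b SA_cj[OF J] by simp
qed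
lemma SA_nz: "J \<in> SA cj \<Longrightarrow> J \<noteq> 0"
  using SA_sq[of J] by auto

lemma SA_neq_neg: assumes J: "J \<in> SA cj" and h: "- J = J" shows False
proof -
  have "J + J = J + - J" using h by simp
  hence "J + J = 0" by simp
  hence "(2::real) *\<^sub>R J = 0" by (simp only: scaleR_2)
  thus False using SA_nz[OF J] by simp
qed

lemma rep_unique:
  assumes J: "J \<in> SA cj" and J': "J' \<in> SA cj"
    and h: "of_real \<alpha> + \<beta> *\<^sub>R J = of_real \<alpha>' + \<beta>' *\<^sub>R J'"
  shows "\<alpha>' = \<alpha> \<and> \<beta>' *\<^sub>R J' = \<beta> *\<^sub>R J \<and> (\<beta>' = \<beta> \<or> \<beta>' = - \<beta>)"
proof -
  have "cj (of_real \<alpha> + \<beta> *\<^sub>R J) = cj (of_real \<alpha>' + \<beta>' *\<^sub>R J')" using h by simp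
  hence h2: "of_real \<alpha> - \<beta> *\<^sub>R J = of_real \<alpha>' - \<beta>' *\<^sub>R J'" using SA_cj[OF J] SA_cj[OF J'] by simp
  have "(of_real \<alpha> + \<beta> *\<^sub>R J) + (of_real \<alpha> - \<beta> *\<^sub>R J) = (of_real \<alpha>' + \<beta>' *\<^sub>R J') + (of_real \<alpha>' - \<beta>' *\<^sub>R J')"
    using h h2 by simp
  hence "of_real \<alpha> + of_real \<alpha> = (of_real \<alpha>' + of_real \<alpha>' :: 'a)" by (simp add: algebra_simps)
  hence "of_real (\<alpha>+\<alpha>) = (of_real (\<alpha>'+\<alpha>') :: 'a)" by (simp only: of_real_add)
  hence "\<alpha>+\<alpha> = \<alpha>'+\<alpha>'" by (simp only: of_real_eq_iff)
  hence a: "\<alpha>' = \<alpha>" by simp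
  with h have b: "\<beta>' *\<^sub>R J' = \<beta> *\<^sub>R J" by simp
  have "(\<beta> *\<^sub>R J) * (\<beta> *\<^sub>R J) = of_real (- (\<beta>*\<beta>))" using SA_sq[OF J] by (simp add: of_real_def)
  moreover have "(\<beta>' *\<^sub>R J') * (\<beta>' *\<^sub>R J') = of_real (- (\<beta>'*\<beta>'))" using SA_sq[OF J'] by (simp add: of_real_def)
  ultimately have "\<beta>'*\<beta>' = \<beta>*\<beta>" using b by (metis neg_equal_iff_equal of_real_eq_iff)
  hence "\<beta>' = \<beta> \<or> \<beta>' = - \<beta>" by (metis square_eq_iff)
  with a b show ?thesis by blast
qed

lemma real_rep: assumes J: "J \<in> SA cj" shows "(of_real \<alpha> + \<beta> *\<^sub>R J \<in> \<real>) = (\<beta> = 0)"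
proof
  assume "of_real \<alpha> + \<beta> *\<^sub>R J \<in> \<real>"
  then obtain r where r: "of_real \<alpha> + \<beta> *\<^sub>R J = of_real r" by (auto elim: Reals_cases)
  hence e: "\<beta> *\<^sub>R J = of_real (r - \<alpha>)" by (simp add: algebra_simps)
  have "cj (\<beta> *\<^sub>R J) = \<beta> *\<^sub>R J" by (simp only: e cj_of_real)
  hence "- (\<beta> *\<^sub>R J) = \<beta> *\<^sub>R J" using SA_cj[OF J] by simp
  hence "\<beta> *\<^sub>R J + \<beta> *\<^sub>R J = 0" by (metis add.right_inverse)
  hence "(\<beta> + \<beta>) *\<^sub>R J = 0" by (simp only: scaleR_add_left)
  thus "\<beta> = 0" using SA_nz[OF J] by simp
qed simp

lemma slice_val:
  assumes F: "is_stem D F" and J: "J \<in> SA cj" and z: "Complex \<alpha> \<beta> \<in> D"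
  shows "slice cj F (of_real \<alpha> + \<beta> *\<^sub>R J) = fst (F (Complex \<alpha> \<beta>)) + J * snd (F (Complex \<alpha> \<beta>))"
proof -
  define P where "P = (\<lambda>v. \<exists>\<alpha>' \<beta>' J'. J' \<in> SA cj \<and> of_real \<alpha> + \<beta> *\<^sub>R J = of_real \<alpha>' + \<beta>' *\<^sub>R J' \<and>
                     v = fst (F (Complex \<alpha>' \<beta>')) + J' * snd (F (Complex \<alpha>' \<beta>')))"
  have "P (fst (F (Complex \<alpha> \<beta>)) + J * snd (F (Complex \<alpha> \<beta>)))" unfolding P_def using J by blast
  hence "P (SOME v. P v)" by (rule someI)
  then obtain \<alpha>' \<beta>' J' where J': "J' \<in> SA cj" and e: "of_real \<alpha> + \<beta> *\<^sub>R J = of_real \<alpha>' + \<beta>' *\<^sub>R J'"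
    and v: "(SOME v. P v) = fst (F (Complex \<alpha>' \<beta>')) + J' * snd (F (Complex \<alpha>' \<beta>'))" unfolding P_def by blast
  from rep_unique[OF J J' e] have a: "\<alpha>' = \<alpha>" and b: "\<beta>' *\<^sub>R J' = \<beta> *\<^sub>R J" and c: "\<beta>' = \<beta> \<or> \<beta>' = - \<beta>" by auto
  have st: "F (cnj (Complex \<alpha> \<beta>)) = (fst (F (Complex \<alpha> \<beta>)), - snd (F (Complex \<alpha> \<beta>)))"
    using F z unfolding is_stem_def by blast
  have "fst (F (Complex \<alpha>' \<beta>')) + J' * snd (F (Complex \<alpha>' \<beta>')) = fst (F (Complex \<alpha> \<beta>)) + J * snd (F (Complex \<alpha> \<beta>))"
  proof (cases "\<beta> = 0")
    case True
    hence "\<beta>' = 0" using c by auto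
    moreover have "snd (F (Complex \<alpha> \<beta>)) = 0"
    proof -
      have "cnj (Complex \<alpha> \<beta>) = Complex \<alpha> \<beta>" using True by (simp add: complex_eq_iff)
      hence "snd (F (Complex \<alpha> \<beta>)) = - snd (F (Complex \<alpha> \<beta>))" using st by (metis snd_conv)
      hence "snd (F (Complex \<alpha> \<beta>)) + snd (F (Complex \<alpha> \<beta>)) = 0" by (metis add.right_inverse)
      hence "(2::real) *\<^sub>R snd (F (Complex \<alpha> \<beta>)) = 0" by (simp only: scaleR_2)
      thus ?thesis by simp
    qed
    ultimately show ?thesis using a True by simp
  next
    case False
    from c show ?thesis
    proof
      assume "\<beta>' = \<beta>"
      with b False have "J' = J" by simp
      with a \<open>\<beta>' = \<beta>\<close> show ?thesis by simp
    next
      assume bb: "\<beta>' = - \<beta>"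
      with b False have "J' = - J" by (metis minus_minus scaleR_cancel_left scaleR_minus_left scaleR_minus_right)
      moreover have "Complex \<alpha>' \<beta>' = cnj (Complex \<alpha> \<beta>)" using a bb by (simp add: complex_eq_iff)
      ultimately show ?thesis using st by simp
    qed
  qed
  thus ?thesis using v unfolding slice_def P_def by simp
qed

lemma stem_prod_stem: assumes "is_stem D F" "is_stem D G" shows "is_stem D (stem_prod F G)"
  unfolding is_stem_def stem_prod_def acmult_def
proof
  fix z assume z: "z \<in> D"
  have "F (cnj z) = (fst (F z), - snd (F z))" "G (cnj z) = (fst (G z), - snd (G z))"
    using assms z unfolding is_stem_def by auto
  thus "(fst (F (cnj z)) * fst (G (cnj z)) - snd (F (cnj z)) * snd (G (cnj z)),
          fst (F (cnj z)) * snd (G (cnj z)) + snd (F (cnj z)) * fst (G (cnj z))) =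
         (fst (fst (F z) * fst (G z) - snd (F z) * snd (G z), fst (F z) * snd (G z) + snd (F z) * fst (G z)),
          - snd (fst (F z) * fst (G z) - snd (F z) * snd (G z), fst (F z) * snd (G z) + snd (F z) * fst (G z)))"
    by simp
qed

lemma stem_cj_stem: "is_stem D F \<Longrightarrow> is_stem D (stem_cj cj F)"
  unfolding is_stem_def stem_cj_def by simp

lemma inv_el_eq: "a * b = 1 \<Longrightarrow> b * a = 1 \<Longrightarrow> inv_el a = (b::'a::real_algebra_1)"
  unfolding inv_el_def
  by (rule the_equality) (auto, metis mult.assoc mult_1_left mult_1_right)

lemma SA_JJ: "J \<in> SA cj \<Longrightarrow> J * (J * x) = - x"
  using SA_sq[of J] by (metis mult.assoc mult_minus1)

lemma sph_val:
  assumes F: "is_stem D F" and J: "J \<in> SA cj" and b: "\<beta> \<noteq> 0" and z: "Complex \<alpha> \<beta> \<in> D"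
  shows "sph_deriv cj (slice cj F) (of_real \<alpha> + \<beta> *\<^sub>R J) = (1/\<beta>) *\<^sub>R snd (F (Complex \<alpha> \<beta>))"
proof -
  have c: "cj (of_real \<alpha> + \<beta> *\<^sub>R J) = of_real \<alpha> + \<beta> *\<^sub>R (- J)" using SA_cj[OF J] by simp
  have h2: "(\<alpha>/2) *\<^sub>R (2::'a) = \<alpha> *\<^sub>R 1"
    by (metis nonzero_eq_divide_eq of_real_def of_real_numeral scaleR_scaleR zero_neq_numeral)
  have im: "im_part cj (of_real \<alpha> + \<beta> *\<^sub>R J) = \<beta> *\<^sub>R J"
    unfolding im_part_def tr_def c by (simp add: of_real_def algebra_simps scaleR_add_right[symmetric] h2)
  have iv: "inv_el (\<beta> *\<^sub>R J) = (- 1/\<beta>) *\<^sub>R J"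
    by (rule inv_el_eq) (use b SA_sq[OF J] in auto)
  have r: "1/(\<beta>*2) + 1/(\<beta>*2) = 1/\<beta>" by (simp add: field_simps)
  have hh: "(1/(\<beta>*2)) *\<^sub>R v + (1/(\<beta>*2)) *\<^sub>R v = (1/\<beta>) *\<^sub>R v" for v :: 'a
    by (simp only: scaleR_add_left[symmetric] r)
  show ?thesis unfolding sph_deriv_def im iv c slice_val[OF F J z] slice_val[OF F SA_neg[OF J] z]
    using b by (simp add: algebra_simps SA_JJ[OF J] hh)
qed

lemma center_mult: "a \<in> center \<Longrightarrow> b \<in> center \<Longrightarrow> a * b \<in> (center::'a set)"
proof -
  assume a: "a \<in> center" and b: "b \<in> center"
  have "a * b * y = y * (a * b)" for y
  proof -
    have "a * b * y = a * (y * b)" using b unfolding center_def by (simp add: mult.assoc)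
    also have "\<dots> = (a * y) * b" by (simp add: mult.assoc)
    also have "\<dots> = y * (a * b)" using a unfolding center_def by (simp add: mult.assoc)
    finally show ?thesis .
  qed
  thus ?thesis unfolding center_def by simp
qed

lemma center_inv: assumes "M \<in> center" "X * M = 1" "M * X = (1::'a)" shows "X \<in> center"
  unfolding center_def
proof (rule CollectI, rule allI)
  fix y
  have "X * y = X * y * (M * X)" using assms by simp
  also have "\<dots> = X * (y * M) * X" by (simp add: mult.assoc)
  also have "\<dots> = X * (M * y) * X" using assms(1) unfolding center_def by simp
  also have "\<dots> = y * X" using assms(2) by (metis mult.assoc mult_1_left)
  finally show "X * y = y * X" .
qed

lemma inv_mult: "invertible_el a \<Longrightarrow> invertible_el b \<Longrightarrow> invertible_el (a * (b::'a))"
  unfolding invertible_el_def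
proof (elim exE conjE)
  fix a' b' assume "a * a' = 1" "a' * a = 1" "b * b' = 1" "b' * b = 1"
  hence "a * b * (b' * a') = 1 \<and> b' * a' * (a * b) = 1" by (metis mult.assoc mult_1_left)
  thus "\<exists>c. a * b * c = 1 \<and> c * (a * b) = 1" by blast
qed

lemma center_comm: "a \<in> center \<Longrightarrow> a * x = x * a" unfolding center_def by simp

lemma CA_nz_inv: assumes "b \<in> CA cj" "b \<noteq> 0" shows "\<exists>bi. b * bi = 1 \<and> bi * b = 1"
proof -
  from assms obtain N' M' where N: "b * cj b * N' = 1" and M: "M' * (cj b * b) = 1"
    unfolding CA_def nrm_def invertible_el_def by auto
  have "M' * cj b = M' * cj b * (b * (cj b * N'))" using N by (simp add: mult.assoc)
  also have "\<dots> = cj b * N'" using M by (metis mult.assoc mult_1_left)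
  finally have "(cj b * N') * b = 1" using M by (metis mult.assoc)
  with N show ?thesis by (metis mult.assoc)
qed

lemma CA_cj: "p \<in> CA cj \<Longrightarrow> cj p \<in> CA cj"
  unfolding CA_def by auto

lemma CA_mult: assumes p: "p \<in> CA cj" and q: "q \<in> CA cj" shows "p * q \<in> CA cj"
proof (cases "p = 0 \<or> q = 0")
  case True thus ?thesis by (auto simp: CA_def)
next
  case False
  hence P: "nrm cj p \<in> center" "invertible_el (nrm cj p)" "nrm cj (cj p) \<in> center" "invertible_el (nrm cj (cj p))"
    and Q: "nrm cj q \<in> center" "invertible_el (nrm cj q)" "nrm cj (cj q) \<in> center" "invertible_el (nrm cj (cj q))"
    using p q unfolding CA_def by auto
  have e1: "nrm cj (p * q) = nrm cj q * nrm cj p"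
  proof -
    have "nrm cj (p * q) = p * (nrm cj q) * cj p" unfolding nrm_def by (simp add: mult.assoc)
    also have "\<dots> = nrm cj q * nrm cj p" using center_comm[OF Q(1)] unfolding nrm_def by (simp add: mult.assoc)
    finally show ?thesis .
  qed
  have e2: "nrm cj (cj (p * q)) = nrm cj (cj p) * nrm cj (cj q)"
  proof -
    have "nrm cj (cj (p * q)) = cj q * (nrm cj (cj p)) * q" unfolding nrm_def by (simp add: mult.assoc)
    also have "\<dots> = nrm cj (cj p) * nrm cj (cj q)" using center_comm[OF P(3)] unfolding nrm_def by (simp add: mult.assoc)
    finally show ?thesis .
  qed
  show ?thesis unfolding CA_def using e1 e2 P Q center_mult inv_mult by auto
qed

lemma CA_inverse: assumes d: "d \<in> CA cj" and i1: "d * di = 1" and i2: "di * d = 1" shows "di \<in> CA cj"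
proof -
  have "d \<noteq> 0" using i1 by auto
  hence D: "nrm cj d \<in> center" "nrm cj (cj d) \<in> center" using d unfolding CA_def by auto
  have c1: "cj di * cj d = 1" using i1 by (metis cj_mult cj_one)
  have c2: "cj d * cj di = 1" using i2 by (metis cj_mult cj_one)
  have a1: "nrm cj di * nrm cj (cj d) = 1" unfolding nrm_def cj_cj
    using c1 i2 by (metis mult.assoc mult_1_left)
  have a2: "nrm cj (cj d) * nrm cj di = 1" unfolding nrm_def cj_cj
    using c2 i1 by (metis mult.assoc mult_1_left)
  have b1: "nrm cj (cj di) * nrm cj d = 1" unfolding nrm_def cj_cj
  proof -
    have "cj di * di * (d * cj d) = cj di * (di * d) * cj d" by (simp add: mult.assoc)
    thus "cj di * di * (d * cj d) = 1" using i2 c1 by simp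
  qed
  have b2: "nrm cj d * nrm cj (cj di) = 1" unfolding nrm_def cj_cj
  proof -
    have "d * cj d * (cj di * di) = d * (cj d * cj di) * di" by (simp add: mult.assoc)
    thus "d * cj d * (cj di * di) = 1" using i1 c2 by simp
  qed
  show ?thesis unfolding CA_def invertible_el_def
    using center_inv[OF D(2) a1 a2] center_inv[OF D(1) b1 b2] a1 a2 b1 b2 by blast
qed

lemma CA_scale: assumes b: "b \<in> CA cj" shows "r *\<^sub>R b \<in> CA cj"
proof (cases "r = 0 \<or> b = 0")
  case True thus ?thesis by (auto simp: CA_def)
next
  case False
  then obtain N M where N: "nrm cj b \<in> center" "nrm cj b * N = 1" "N * nrm cj b = 1"
    and M: "nrm cj (cj b) \<in> center" "nrm cj (cj b) * M = 1" "M * nrm cj (cj b) = 1"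
    using b unfolding CA_def invertible_el_def by auto
  have e1: "nrm cj (r *\<^sub>R b) = (r*r) *\<^sub>R nrm cj b" unfolding nrm_def by simp
  have e2: "nrm cj (cj (r *\<^sub>R b)) = (r*r) *\<^sub>R nrm cj (cj b)" unfolding nrm_def by simp
  have cs: "x \<in> center \<Longrightarrow> s *\<^sub>R x \<in> center" for x s unfolding center_def by simp
  have iv: "x * y = 1 \<Longrightarrow> y * x = 1 \<Longrightarrow> invertible_el ((r*r) *\<^sub>R x)" for x y
    unfolding invertible_el_def using False by (intro exI[of _ "(1/(r*r)) *\<^sub>R y"]) simp
  have c1: "nrm cj (r *\<^sub>R b) \<in> center" unfolding e1 using cs N by blast
  have c2: "invertible_el (nrm cj (r *\<^sub>R b))" unfolding e1 using iv N by blast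
  have c3: "nrm cj (cj (r *\<^sub>R b)) \<in> center" unfolding e2 using cs M by blast
  have c4: "invertible_el (nrm cj (cj (r *\<^sub>R b)))" unfolding e2 using iv M by blast
  show ?thesis unfolding CA_def using c1 c2 c3 c4 by blast
qed

lemma conj_SA:
  assumes w: "w \<in> CA cj" and i1: "w * wi = 1" and i2: "wi * w = 1" and I: "I \<in> SA cj"
  shows "w * I * wi \<in> SA cj \<and> wi * I * w \<in> SA cj"
proof -
  have "w \<noteq> 0" using i1 by auto
  then obtain Ni where N: "w * cj w \<in> center" "(w * cj w) * Ni = 1" "Ni * (w * cj w) = 1"
    using w unfolding CA_def invertible_el_def nrm_def by auto
  define N where "N = w * cj w"
  have Nc: "N * x = x * N" for x using N(1) unfolding N_def center_def by simp
  have NN: "N * Ni = 1" "Ni * N = 1" using N unfolding N_def by auto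
  have cw: "cj w = wi * N" unfolding N_def using i2 by (metis mult.assoc mult_1_left)
  have c1: "cj wi * cj w = 1" using i1 by (metis cj_mult cj_one)
  have "cj wi * wi * N = 1" using c1 cw by (simp add: mult.assoc)
  hence "cj wi * wi = Ni" using NN by (metis mult.assoc mult_1_left mult_1_right)
  hence cwi: "cj wi = Ni * w" using i2 by (metis mult.assoc mult_1_right)
  have II: "I * (I * x) = - x" for x using SA_JJ[OF I] .
  have x1: "cj (w * I * wi) = - (w * I * wi)"
  proof -
    have "cj (w * I * wi) = - (Ni * w * I * (wi * N))" using SA_cj[OF I] cwi cw by (simp add: mult.assoc)
    also have "\<dots> = - (Ni * N * (w * I * wi))" using Nc by (metis mult.assoc)
    finally show ?thesis using NN by simp
  qed
  have x2: "cj (wi * I * w) = - (wi * I * w)"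
  proof -
    have "cj (wi * I * w) = - (wi * N * I * (Ni * w))" using SA_cj[OF I] cwi cw by (simp add: mult.assoc)
    also have "\<dots> = - (wi * I * (N * Ni) * w)" using Nc by (metis mult.assoc)
    finally show ?thesis using NN by simp
  qed
  have n1: "(w * I * wi) * (w * I * wi) = - 1"
  proof -
    have "(w * I * wi) * (w * I * wi) = w * (I * ((wi * w) * (I * wi)))" by (simp add: mult.assoc)
    also have "\<dots> = - (w * wi)" using i2 II by simp
    finally show ?thesis using i1 by simp
  qed
  have n2: "(wi * I * w) * (wi * I * w) = - 1"
  proof -
    have "(wi * I * w) * (wi * I * w) = wi * (I * ((w * wi) * (I * w)))" by (simp add: mult.assoc)
    also have "\<dots> = - (wi * w)" using i1 II by simp
    finally show ?thesis using i2 by simp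
  qed
  show ?thesis unfolding SA_def tr_def nrm_def using x1 x2 n1 n2 by simp
qed

lemma uniq_e: assumes "e * ee = 1" "X + I * e = 0" "X + I' * e = 0" shows "I = (I'::'a)"
proof -
  have "I * e = I' * e" using assms(2,3) by (metis add_left_cancel)
  hence "I * e * ee = I' * e * ee" by simp
  thus ?thesis using assms(1) by (simp add: mult.assoc)
qed

lemma lin_zero: assumes J: "J \<in> SA cj" and "a + J * b = 0" "a + (- J) * b = 0" shows "a = 0 \<and> b = 0"
proof -
  have a1: "a = - (J * b)" using assms(2) by (simp add: eq_neg_iff_add_eq_0)
  have "- (J * b) + - (J * b) = 0" using assms(3) unfolding a1 by (simp only: minus_mult_left)
  hence "(2::real) *\<^sub>R (- (J * b)) = 0" by (simp only: scaleR_2)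
  hence "J * b = 0" by simp
  hence "J * (J * b) = 0" by simp
  hence "b = 0" using SA_JJ[OF J] by simp
  thus ?thesis using assms(2) by simp
qed

lemma core_unique:
  assumes I0: "I0 \<in> SA cj" and a: "a + I0 * b = 0" and e: "e = a * d + b * c"
    and eCA: "e \<in> CA cj" and enz: "e \<noteq> 0"
  shows "{I \<in> SA cj. (a * c - b * d) + I * e = 0} = {I0}"
proof -
  have aa: "a = - (I0 * b)" using a by (simp add: eq_neg_iff_add_eq_0)
  have z: "(a * c - b * d) + I0 * e = 0"
    unfolding e aa using SA_JJ[OF I0] by (simp add: algebra_simps)
  obtain ee where ee: "e * ee = 1" using CA_nz_inv[OF eCA enz] by blast
  show ?thesis using z I0 uniq_e[OF ee] by blast
qed

lemma core2:
  assumes I0: "I0 \<in> SA cj" and a: "a + I0 * b = 0" and uf: "\<forall>I\<in>SA cj. a + I * b = 0 \<longrightarrow> I = I0"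
    and ng: "\<forall>I\<in>SA cj. c + I * d \<noteq> 0"
    and bCA: "b \<in> CA cj" and e: "e = a * d + b * c" and eCA: "e \<in> CA cj"
  shows "{I \<in> SA cj. (a * c - b * d) + I * e = 0} = {I0}"
proof -
  have aa: "a = - (I0 * b)" using a by (simp add: eq_neg_iff_add_eq_0)
  have bnz: "b \<noteq> 0"
  proof
    assume "b = 0"
    hence "a + (- I0) * b = 0" using a by simp
    hence "- I0 = I0" using uf SA_neg[OF I0] by blast
    thus False using SA_neq_neg[OF I0] by blast
  qed
  have enz: "e \<noteq> 0"
  proof
    assume e0: "e = 0"
    obtain bi where bi: "b * bi = 1" "bi * b = 1" using CA_nz_inv[OF bCA bnz] by blast
    have "b * c = I0 * b * d" using e0 unfolding e aa by (simp add: mult.assoc eq_neg_iff_add_eq_0)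
    hence "bi * b * c = bi * I0 * b * d" by (simp add: mult.assoc)
    hence cc: "c = bi * I0 * b * d" using bi by simp
    have "bi * I0 * b \<in> SA cj" using conj_SA[OF bCA bi I0] by blast
    hence "- (bi * I0 * b) \<in> SA cj" by (rule SA_neg)
    moreover have "c + (- (bi * I0 * b)) * d = 0" unfolding cc by (simp add: mult.assoc)
    ultimately show False using ng by blast
  qed
  show ?thesis using core_unique[OF I0 a e eCA enz] .
qed

lemma core4:
  assumes I0: "I0 \<in> SA cj" and a: "a + I0 * b = 0"
    and I1: "I1 \<in> SA cj" and c: "c + I1 * d = 0" and ug: "\<forall>I\<in>SA cj. c + I * d = 0 \<longrightarrow> I = I1"
    and dCA: "d \<in> CA cj" and e: "e = a * d + b * c" and eCA: "e \<in> CA cj"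
  shows "(a = b * I1 \<longrightarrow> (\<forall>I. (a * c - b * d) + I * e = 0))
       \<and> (a \<noteq> b * I1 \<longrightarrow> {I \<in> SA cj. (a * c - b * d) + I * e = 0} = {I0})"
proof -
  have cc: "c = - (I1 * d)" using c by (simp add: eq_neg_iff_add_eq_0)
  have ee: "e = (a - b * I1) * d" unfolding e cc by (simp add: algebra_simps)
  have dnz: "d \<noteq> 0"
  proof
    assume "d = 0"
    hence "c + (- I1) * d = 0" using c by simp
    hence "- I1 = I1" using ug SA_neg[OF I1] by blast
    thus False using SA_neq_neg[OF I1] by blast
  qed
  obtain di where di: "d * di = 1" using CA_nz_inv[OF dCA dnz] by blast
  show ?thesis
  proof (intro conjI impI)
    assume ab: "a = b * I1"
    show "\<forall>I. (a * c - b * d) + I * e = 0"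
      unfolding ee cc ab using SA_JJ[OF I1] by (simp add: algebra_simps)
  next
    assume ab: "a \<noteq> b * I1"
    have "e \<noteq> 0"
    proof
      assume "e = 0"
      hence "(a - b * I1) * d * di = 0" unfolding ee by simp
      hence "a - b * I1 = 0" using di by (simp add: mult.assoc)
      thus False using ab by simp
    qed
    thus "{I \<in> SA cj. (a * c - b * d) + I * e = 0} = {I0}" using core_unique[OF I0 a e eCA] by blast
  qed
qed

lemma core3:
  assumes nf: "\<forall>I\<in>SA cj. a + I * b \<noteq> 0"
    and I1: "I1 \<in> SA cj" and c: "c + I1 * d = 0" and ug: "\<forall>I\<in>SA cj. c + I * d = 0 \<longrightarrow> I = I1"
    and bCA: "b \<in> CA cj" and dCA: "d \<in> CA cj" and e: "e = a * d + b * c" and eCA: "e \<in> CA cj"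
  shows "cj a + I1 * cj b \<in> CA cj - {0}
       \<and> {I \<in> SA cj. (a * c - b * d) + I * e = 0} = {inv_el (cj a + I1 * cj b) * I1 * (cj a + I1 * cj b)}"
proof -
  define w where "w = a - b * I1"
  have cc: "c = - (I1 * d)" using c by (simp add: eq_neg_iff_add_eq_0)
  have ee: "e = w * d" unfolding e cc w_def by (simp add: algebra_simps)
  have cw: "cj w = cj a + I1 * cj b" unfolding w_def using SA_cj[OF I1] by simp
  have dnz: "d \<noteq> 0"
  proof
    assume "d = 0"
    hence "c + (- I1) * d = 0" using c by simp
    hence "- I1 = I1" using ug SA_neg[OF I1] by blast
    thus False using SA_neq_neg[OF I1] by blast
  qed
  obtain di where di: "d * di = 1" "di * d = 1" using CA_nz_inv[OF dCA dnz] by blast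
  have wnz: "w \<noteq> 0"
  proof
    assume w0: "w = 0"
    hence ab: "a = b * I1" unfolding w_def by simp
    show False
    proof (cases "b = 0")
      case True thus False using nf I1 ab by auto
    next
      case False
      obtain bi where bi: "b * bi = 1" "bi * b = 1" using CA_nz_inv[OF bCA False] by blast
      have "b * I1 * bi \<in> SA cj" using conj_SA[OF bCA bi I1] by blast
      hence "- (b * I1 * bi) \<in> SA cj" by (rule SA_neg)
      moreover have "a + (- (b * I1 * bi)) * b = 0" unfolding ab using bi by (simp add: mult.assoc)
      ultimately show False using nf by blast
    qed
  qed
  have wed: "w = e * di" unfolding ee using di by (simp add: mult.assoc)
  have wCA: "w \<in> CA cj" unfolding wed by (rule CA_mult[OF eCA CA_inverse[OF dCA di]])
  have cwCA: "cj w \<in> CA cj" by (rule CA_cj[OF wCA])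
  have cwnz: "cj w \<noteq> 0" using wnz by (metis cj_cj cj_zero)
  obtain u where u: "cj w * u = 1" "u * cj w = 1" using CA_nz_inv[OF cwCA cwnz] by blast
  have iu: "inv_el (cj w) = u" using inv_el_eq u by blast
  define I where "I = u * I1 * cj w"
  have ISA: "I \<in> SA cj" unfolding I_def using conj_SA[OF cwCA u I1] by blast
  have Kc: "cj w * w \<in> center" using wCA wnz unfolding CA_def nrm_def by auto
  have Iw: "I * w = w * I1"
  proof -
    have "I * w = u * (I1 * (cj w * w))" unfolding I_def by (simp add: mult.assoc)
    also have "\<dots> = u * (cj w * w) * I1" using center_comm[OF Kc] by (simp add: mult.assoc)
    also have "\<dots> = w * I1" using u by (simp flip: mult.assoc)
    finally show ?thesis .
  qed
  have zI: "(a * c - b * d) + I * e = 0"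
  proof -
    have wI: "w * I1 = a * I1 + b" unfolding w_def using SA_sq[OF I1]
      by (simp add: left_diff_distrib mult.assoc)
    have "I * e = (I * w) * d" unfolding ee by (simp add: mult.assoc)
    hence "I * e = (a * I1 + b) * d" using Iw wI by simp
    thus ?thesis unfolding cc by (simp add: algebra_simps)
  qed
  have enz: "e \<noteq> 0"
  proof
    assume "e = 0" hence "w = 0" unfolding wed by simp
    thus False using wnz by simp
  qed
  obtain ei where ei: "e * ei = 1" using CA_nz_inv[OF eCA enz] by blast
  have "{I \<in> SA cj. (a * c - b * d) + I * e = 0} = {I}" using zI ISA uniq_e[OF ei] by blast
  thus ?thesis using cwCA cwnz unfolding cw[symmetric] iu I_def by simp
qed

lemma Omega_mem: "Complex \<alpha> \<beta> \<in> D \<Longrightarrow> I \<in> SA cj \<Longrightarrow> of_real \<alpha> + \<beta> *\<^sub>R I \<in> Omega cj D"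
  unfolding Omega_def by (rule CollectI, rule exI[of _ "Complex \<alpha> \<beta>"], rule exI[of _ I]) simp

lemma Omega_elim: assumes "x \<in> Omega cj D"
  obtains \<alpha> \<beta> J where "J \<in> SA cj" "Complex \<alpha> \<beta> \<in> D" "x = of_real \<alpha> + \<beta> *\<^sub>R J"
proof -
  from assms obtain z J where z: "z \<in> D" and J: "J \<in> SA cj" and x: "x = of_real (Re z) + Im z *\<^sub>R J"
    unfolding Omega_def by blast
  have "Complex (Re z) (Im z) \<in> D" using z by simp
  thus ?thesis using that J x by blast
qed

lemma Sx_rep: assumes J0: "J0 \<in> SA cj"
  shows "Sx cj (of_real \<alpha> + \<beta> *\<^sub>R J0) = (\<lambda>I. of_real \<alpha> + \<beta> *\<^sub>R I) ` SA cj"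
proof
  show "(\<lambda>I. of_real \<alpha> + \<beta> *\<^sub>R I) ` SA cj \<subseteq> Sx cj (of_real \<alpha> + \<beta> *\<^sub>R J0)"
    unfolding Sx_def using J0 by blast
  show "Sx cj (of_real \<alpha> + \<beta> *\<^sub>R J0) \<subseteq> (\<lambda>I. of_real \<alpha> + \<beta> *\<^sub>R I) ` SA cj"
  proof
    fix y assume "y \<in> Sx cj (of_real \<alpha> + \<beta> *\<^sub>R J0)"
    then obtain \<alpha>' \<beta>' J I where J: "J \<in> SA cj" and I: "I \<in> SA cj"
      and e: "of_real \<alpha> + \<beta> *\<^sub>R J0 = of_real \<alpha>' + \<beta>' *\<^sub>R J" and y: "y = of_real \<alpha>' + \<beta>' *\<^sub>R I"
      unfolding Sx_def by blast
    from rep_unique[OF J0 J e] have a: "\<alpha>' = \<alpha>" and b: "\<beta>' = \<beta> \<or> \<beta>' = - \<beta>" by auto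
    from b show "y \<in> (\<lambda>I. of_real \<alpha> + \<beta> *\<^sub>R I) ` SA cj"
    proof
      assume "\<beta>' = \<beta>" thus ?thesis using y a I by blast
    next
      assume "\<beta>' = - \<beta>" hence "y = of_real \<alpha> + \<beta> *\<^sub>R (- I)" using y a by simp
      thus ?thesis using SA_neg[OF I] by blast
    qed
  qed
qed

lemma stem_real: assumes F: "is_stem D F" and z: "Complex \<alpha> 0 \<in> D" shows "snd (F (Complex \<alpha> 0)) = 0"
proof -
  have st: "F (cnj (Complex \<alpha> 0)) = (fst (F (Complex \<alpha> 0)), - snd (F (Complex \<alpha> 0)))"
    using F z unfolding is_stem_def by blast
  have "cnj (Complex \<alpha> 0) = Complex \<alpha> 0" by (simp add: complex_eq_iff)
  hence "snd (F (Complex \<alpha> 0)) = - snd (F (Complex \<alpha> 0))" using st by (metis snd_conv)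
  hence "snd (F (Complex \<alpha> 0)) + snd (F (Complex \<alpha> 0)) = 0" by (metis add.right_inverse)
  hence "(2::real) *\<^sub>R snd (F (Complex \<alpha> 0)) = 0" by (simp only: scaleR_2)
  thus ?thesis by simp
qed

lemma pt_inj: "\<beta> \<noteq> 0 \<Longrightarrow> (of_real \<alpha> + \<beta> *\<^sub>R I = of_real \<alpha> + \<beta> *\<^sub>R I') = (I = I')"
  by simp

end
theorem theorem5p12:
  fixes cj :: "'a::real_algebra_1 \<Rightarrow> 'a"
    and D :: "complex set"
    and F G :: "complex \<Rightarrow> 'a \<times> 'a"
  assumes fd: "fin_dim_alg TYPE('a)"
    and inv: "star_involution cj"
    and SA_ne: "SA cj \<noteq> {}"
    and D_ne: "D \<noteq> {}"
    and D_cnj: "\<forall>z\<in>D. cnj z \<in> D"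
    and F: "is_stem D F" and G: "is_stem D G"
  defines "f \<equiv> slice cj F" and "g \<equiv> slice cj G"
    and "fg \<equiv> slice cj (stem_prod F G)"
    and "fc \<equiv> slice cj (stem_cj cj F)"
    and "\<Omega> \<equiv> Omega cj D"
  shows
    "(\<forall>x\<in>\<Omega>. x \<in> \<real> \<longrightarrow> x \<in> zeros \<Omega> f \<union> zeros \<Omega> g \<longrightarrow> x \<in> zeros \<Omega> fg)
     \<and> (\<forall>x\<in>\<Omega>. Sx cj x \<subseteq> zeros \<Omega> f \<or> Sx cj x \<subseteq> zeros \<Omega> g \<longrightarrow> Sx cj x \<subseteq> zeros \<Omega> fg)
     \<and> (\<forall>x\<in>\<Omega> - \<real>. sph_deriv cj f x \<in> CA cj \<longrightarrow> sph_deriv cj g x \<in> CA cj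
            \<longrightarrow> sph_deriv cj fg x \<in> CA cj \<longrightarrow>
          (\<forall>y. Sx cj x \<inter> zeros \<Omega> f = {y} \<and> Sx cj x \<inter> zeros \<Omega> g = {}
                 \<longrightarrow> Sx cj x \<inter> zeros \<Omega> fg = {y})
        \<and> (\<forall>z. Sx cj x \<inter> zeros \<Omega> f = {} \<and> Sx cj x \<inter> zeros \<Omega> g = {z}
                 \<longrightarrow> fc z \<in> CA cj - {0}
                   \<and> Sx cj x \<inter> zeros \<Omega> fg = {inv_el (fc z) * z * fc z})
        \<and> (\<forall>y z. Sx cj x \<inter> zeros \<Omega> f = {y} \<and> Sx cj x \<inter> zeros \<Omega> g = {z}
                 \<longrightarrow> (if cj y * sph_deriv cj f x = sph_deriv cj f x * z
                      then Sx cj x \<subseteq> zeros \<Omega> fg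
                      else Sx cj x \<inter> zeros \<Omega> fg = {y})))"
proof -
  note sv = slice_val[OF inv]
  have FG: "is_stem D (stem_prod F G)" using stem_prod_stem[OF inv F G] .
  have FC: "is_stem D (stem_cj cj F)" using stem_cj_stem[OF inv F] .
  have sp: "stem_prod F G zz = (fst (F zz) * fst (G zz) - snd (F zz) * snd (G zz),
               fst (F zz) * snd (G zz) + snd (F zz) * fst (G zz))" for zz
    unfolding stem_prod_def acmult_def by simp
  have P1: "\<forall>x\<in>\<Omega>. x \<in> \<real> \<longrightarrow> x \<in> zeros \<Omega> f \<union> zeros \<Omega> g \<longrightarrow> x \<in> zeros \<Omega> fg"
  proof (intro ballI impI)
    fix x assume x: "x \<in> \<Omega>" and xr: "x \<in> \<real>" and xz: "x \<in> zeros \<Omega> f \<union> zeros \<Omega> g"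
    obtain \<alpha> \<beta> J where J: "J \<in> SA cj" and zD: "Complex \<alpha> \<beta> \<in> D" and xe: "x = of_real \<alpha> + \<beta> *\<^sub>R J"
      using Omega_elim[OF inv x[unfolded \<Omega>_def]] by blast
    have b0: "\<beta> = 0" using real_rep[OF inv J] xr xe by simp
    have sF: "snd (F (Complex \<alpha> \<beta>)) = 0" using stem_real[OF inv F] zD b0 by simp
    have sG: "snd (G (Complex \<alpha> \<beta>)) = 0" using stem_real[OF inv G] zD b0 by simp
    have "f x = 0 \<or> g x = 0" using xz unfolding zeros_def by auto
    hence "fst (F (Complex \<alpha> \<beta>)) = 0 \<or> fst (G (Complex \<alpha> \<beta>)) = 0"
      unfolding f_def g_def xe sv[OF F J zD] sv[OF G J zD] using sF sG by simp
    hence "fg x = 0" unfolding fg_def xe sv[OF FG J zD] sp using sF sG by auto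
    thus "x \<in> zeros \<Omega> fg" using x unfolding zeros_def by simp
  qed
  have P2: "\<forall>x\<in>\<Omega>. Sx cj x \<subseteq> zeros \<Omega> f \<or> Sx cj x \<subseteq> zeros \<Omega> g \<longrightarrow> Sx cj x \<subseteq> zeros \<Omega> fg"
  proof (intro ballI impI)
    fix x assume x: "x \<in> \<Omega>" and hz: "Sx cj x \<subseteq> zeros \<Omega> f \<or> Sx cj x \<subseteq> zeros \<Omega> g"
    obtain \<alpha> \<beta> J where J: "J \<in> SA cj" and zD: "Complex \<alpha> \<beta> \<in> D" and xe: "x = of_real \<alpha> + \<beta> *\<^sub>R J"
      using Omega_elim[OF inv x[unfolded \<Omega>_def]] by blast
    have Sx: "Sx cj x = (\<lambda>I. of_real \<alpha> + \<beta> *\<^sub>R I) ` SA cj" unfolding xe by (rule Sx_rep[OF inv J])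
    have two: "of_real \<alpha> + \<beta> *\<^sub>R J \<in> Sx cj x" "of_real \<alpha> + \<beta> *\<^sub>R (- J) \<in> Sx cj x"
      unfolding Sx using J SA_neg[OF inv J] by (blast intro: imageI)+
    have "(fst (F (Complex \<alpha> \<beta>)) = 0 \<and> snd (F (Complex \<alpha> \<beta>)) = 0) \<or>
          (fst (G (Complex \<alpha> \<beta>)) = 0 \<and> snd (G (Complex \<alpha> \<beta>)) = 0)"
    proof (rule disjE[OF hz])
      assume "Sx cj x \<subseteq> zeros \<Omega> f"
      hence "f (of_real \<alpha> + \<beta> *\<^sub>R J) = 0" "f (of_real \<alpha> + \<beta> *\<^sub>R (- J)) = 0"
        using two unfolding zeros_def by auto
      hence "fst (F (Complex \<alpha> \<beta>)) + J * snd (F (Complex \<alpha> \<beta>)) = 0"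
            "fst (F (Complex \<alpha> \<beta>)) + (- J) * snd (F (Complex \<alpha> \<beta>)) = 0"
        unfolding f_def sv[OF F J zD] sv[OF F SA_neg[OF inv J] zD] by auto
      thus ?thesis using lin_zero[OF inv J] by blast
    next
      assume "Sx cj x \<subseteq> zeros \<Omega> g"
      hence "g (of_real \<alpha> + \<beta> *\<^sub>R J) = 0" "g (of_real \<alpha> + \<beta> *\<^sub>R (- J)) = 0"
        using two unfolding zeros_def by auto
      hence "fst (G (Complex \<alpha> \<beta>)) + J * snd (G (Complex \<alpha> \<beta>)) = 0"
            "fst (G (Complex \<alpha> \<beta>)) + (- J) * snd (G (Complex \<alpha> \<beta>)) = 0"
        unfolding g_def sv[OF G J zD] sv[OF G SA_neg[OF inv J] zD] by auto
      thus ?thesis using lin_zero[OF inv J] by blast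
    qed
    hence z0: "fg (of_real \<alpha> + \<beta> *\<^sub>R I) = 0" if "I \<in> SA cj" for I
      unfolding fg_def sv[OF FG that zD] sp by auto
    show "Sx cj x \<subseteq> zeros \<Omega> fg" unfolding Sx zeros_def \<Omega>_def
      using z0 Omega_mem[OF inv zD] by auto
  qed
  have P3: "\<forall>x\<in>\<Omega> - \<real>. sph_deriv cj f x \<in> CA cj \<longrightarrow> sph_deriv cj g x \<in> CA cj
            \<longrightarrow> sph_deriv cj fg x \<in> CA cj \<longrightarrow>
          (\<forall>y. Sx cj x \<inter> zeros \<Omega> f = {y} \<and> Sx cj x \<inter> zeros \<Omega> g = {}
                 \<longrightarrow> Sx cj x \<inter> zeros \<Omega> fg = {y})
        \<and> (\<forall>z. Sx cj x \<inter> zeros \<Omega> f = {} \<and> Sx cj x \<inter> zeros \<Omega> g = {z}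
                 \<longrightarrow> fc z \<in> CA cj - {0}
                   \<and> Sx cj x \<inter> zeros \<Omega> fg = {inv_el (fc z) * z * fc z})
        \<and> (\<forall>y z. Sx cj x \<inter> zeros \<Omega> f = {y} \<and> Sx cj x \<inter> zeros \<Omega> g = {z}
                 \<longrightarrow> (if cj y * sph_deriv cj f x = sph_deriv cj f x * z
                      then Sx cj x \<subseteq> zeros \<Omega> fg
                      else Sx cj x \<inter> zeros \<Omega> fg = {y}))"
  proof (intro ballI impI)
    fix x assume xO: "x \<in> \<Omega> - \<real>" and cf: "sph_deriv cj f x \<in> CA cj" and cg: "sph_deriv cj g x \<in> CA cj"
      and cfg: "sph_deriv cj fg x \<in> CA cj"
    obtain \<alpha> \<beta> J where J: "J \<in> SA cj" and zD: "Complex \<alpha> \<beta> \<in> D" and xe: "x = of_real \<alpha> + \<beta> *\<^sub>R J"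
      using Omega_elim[OF inv, of x D] xO unfolding \<Omega>_def by blast
    have bnz: "\<beta> \<noteq> 0" using real_rep[OF inv J] xO xe by auto
    define zz where "zz = Complex \<alpha> \<beta>"
    define a where "a = fst (F zz)"
    define b where "b = snd (F zz)"
    define c where "c = fst (G zz)"
    define d where "d = snd (G zz)"
    define e where "e = a * d + b * c"
    define pt where "pt = (\<lambda>I. of_real \<alpha> + \<beta> *\<^sub>R I :: 'a)"
    have ptinj: "pt I = pt I' \<longleftrightarrow> I = I'" for I I' unfolding pt_def using bnz by simp
    have scale: "\<beta> *\<^sub>R ((1/\<beta>) *\<^sub>R v) = v" for v :: 'a using bnz by simp
    have bCA: "b \<in> CA cj" using CA_scale[OF inv cf, of \<beta>] unfolding f_def xe sph_val[OF inv F J bnz zD] scale b_def zz_def .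
    have dCA: "d \<in> CA cj" using CA_scale[OF inv cg, of \<beta>] unfolding g_def xe sph_val[OF inv G J bnz zD] scale d_def zz_def .
    have eCA: "e \<in> CA cj" using CA_scale[OF inv cfg, of \<beta>] unfolding fg_def xe sph_val[OF inv FG J bnz zD] scale
      unfolding e_def a_def b_def c_def d_def zz_def sp by simp
    have Sx: "Sx cj x = pt ` SA cj" unfolding xe pt_def by (rule Sx_rep[OF inv J])
    have Z: "Sx cj x \<inter> zeros \<Omega> (slice cj H) = pt ` {I \<in> SA cj. fst (H zz) + I * snd (H zz) = 0}"
      if H: "is_stem D H" for H
    proof -
      have "pt I \<in> \<Omega>" if "I \<in> SA cj" for I unfolding pt_def \<Omega>_def using Omega_mem[OF inv zD that] .
      moreover have "slice cj H (pt I) = fst (H zz) + I * snd (H zz)" if "I \<in> SA cj" for I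
        unfolding pt_def zz_def using sv[OF H that zD] .
      ultimately show ?thesis unfolding Sx zeros_def by auto
    qed
    have Zf: "Sx cj x \<inter> zeros \<Omega> f = pt ` {I \<in> SA cj. a + I * b = 0}" unfolding f_def a_def b_def by (rule Z[OF F])
    have Zg: "Sx cj x \<inter> zeros \<Omega> g = pt ` {I \<in> SA cj. c + I * d = 0}" unfolding g_def c_def d_def by (rule Z[OF G])
    have Zfg: "Sx cj x \<inter> zeros \<Omega> fg = pt ` {I \<in> SA cj. (a * c - b * d) + I * e = 0}"
      unfolding fg_def Z[OF FG] sp a_def b_def c_def d_def e_def by simp
    have single: "\<exists>I0. y = pt I0 \<and> I0 \<in> SA cj \<and> P I0 \<and> (\<forall>I\<in>SA cj. P I \<longrightarrow> I = I0)"
      if "pt ` {I \<in> SA cj. P I} = {y}" for P y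
    proof -
      have "y \<in> pt ` {I \<in> SA cj. P I}" unfolding that by simp
      then obtain I0 where I0: "I0 \<in> SA cj" "P I0" "y = pt I0" by (auto simp only: image_iff mem_Collect_eq)
      moreover have u: "\<forall>I\<in>SA cj. P I \<longrightarrow> I = I0"
      proof (intro ballI impI)
        fix I assume I: "I \<in> SA cj" "P I"
        have "pt I \<in> pt ` {I \<in> SA cj. P I}" by (rule imageI) (simp add: I)
        hence "pt I = y" unfolding that by simp
        hence "pt I = pt I0" using I0(3) by simp
        thus "I = I0" by (simp only: ptinj)
      qed
      show ?thesis by (rule exI[of _ I0], intro conjI) (fact I0(3), fact I0(1), fact I0(2), fact u)
    qed
    show "(\<forall>y. Sx cj x \<inter> zeros \<Omega> f = {y} \<and> Sx cj x \<inter> zeros \<Omega> g = {}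
                 \<longrightarrow> Sx cj x \<inter> zeros \<Omega> fg = {y})
        \<and> (\<forall>z. Sx cj x \<inter> zeros \<Omega> f = {} \<and> Sx cj x \<inter> zeros \<Omega> g = {z}
                 \<longrightarrow> fc z \<in> CA cj - {0}
                   \<and> Sx cj x \<inter> zeros \<Omega> fg = {inv_el (fc z) * z * fc z})
        \<and> (\<forall>y z. Sx cj x \<inter> zeros \<Omega> f = {y} \<and> Sx cj x \<inter> zeros \<Omega> g = {z}
                 \<longrightarrow> (if cj y * sph_deriv cj f x = sph_deriv cj f x * z
                      then Sx cj x \<subseteq> zeros \<Omega> fg
                      else Sx cj x \<inter> zeros \<Omega> fg = {y}))"
    proof (intro conjI allI impI)
      fix y assume h: "Sx cj x \<inter> zeros \<Omega> f = {y} \<and> Sx cj x \<inter> zeros \<Omega> g = {}"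
      obtain I0 where I0: "y = pt I0" "I0 \<in> SA cj" "a + I0 * b = 0" "\<forall>I\<in>SA cj. a + I * b = 0 \<longrightarrow> I = I0"
        using single[of "\<lambda>I. a + I * b = 0" y, OF conjunct1[OF h[unfolded Zf]]] by blast
      have ng: "\<forall>I\<in>SA cj. c + I * d \<noteq> 0" using conjunct2[OF h[unfolded Zg]]
        by (simp only: image_is_empty Collect_empty_eq) blast
      show "Sx cj x \<inter> zeros \<Omega> fg = {y}"
        unfolding Zfg core2[OF inv I0(2,3,4) ng bCA e_def eCA] using I0(1) by simp
    next
      fix z assume h: "Sx cj x \<inter> zeros \<Omega> f = {} \<and> Sx cj x \<inter> zeros \<Omega> g = {z}"
      obtain I1 where I1: "z = pt I1" "I1 \<in> SA cj" "c + I1 * d = 0" "\<forall>I\<in>SA cj. c + I * d = 0 \<longrightarrow> I = I1"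
        using single[of "\<lambda>I. c + I * d = 0" z, OF conjunct2[OF h[unfolded Zg]]] by blast
      have nf: "\<forall>I\<in>SA cj. a + I * b \<noteq> 0" using conjunct1[OF h[unfolded Zf]]
        by (simp only: image_is_empty Collect_empty_eq) blast
      have fcz: "fc z = cj a + I1 * cj b"
        unfolding fc_def I1(1) pt_def sv[OF FC I1(2) zD] stem_cj_def a_def b_def zz_def by simp
      note C3 = core3[OF inv nf I1(2,3,4) bCA dCA e_def eCA, folded fcz]
      obtain u where u: "fc z * u = 1" "u * fc z = 1" using CA_nz_inv[OF inv] C3 by blast
      have iu: "inv_el (fc z) = u" using inv_el_eq[OF inv u] .
      have pe: "pt (u * I1 * fc z) = u * z * fc z"
      proof -
        have "u * pt I1 * fc z = pt (u * I1 * fc z)" unfolding pt_def using u(2)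
          by (simp add: algebra_simps of_real_def)
        thus ?thesis by (simp only: I1(1)[symmetric])
      qed
      show "fc z \<in> CA cj - {0}" using C3 by blast
      show "Sx cj x \<inter> zeros \<Omega> fg = {inv_el (fc z) * z * fc z}"
        unfolding Zfg using C3 pe unfolding iu by simp
    next
      fix y z assume h: "Sx cj x \<inter> zeros \<Omega> f = {y} \<and> Sx cj x \<inter> zeros \<Omega> g = {z}"
      obtain I0 where I0: "y = pt I0" "I0 \<in> SA cj" "a + I0 * b = 0" "\<forall>I\<in>SA cj. a + I * b = 0 \<longrightarrow> I = I0"
        using single[of "\<lambda>I. a + I * b = 0" y, OF conjunct1[OF h[unfolded Zf]]] by blast
      obtain I1 where I1: "z = pt I1" "I1 \<in> SA cj" "c + I1 * d = 0" "\<forall>I\<in>SA cj. c + I * d = 0 \<longrightarrow> I = I1"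
        using single[of "\<lambda>I. c + I * d = 0" z, OF conjunct2[OF h[unfolded Zg]]] by blast
      have sd: "sph_deriv cj f x = (1/\<beta>) *\<^sub>R b" unfolding f_def xe sph_val[OF inv F J bnz zD] b_def zz_def ..
      have aa: "a = - (I0 * b)" using I0(3) by (simp add: eq_neg_iff_add_eq_0)
      have lhs: "cj y * sph_deriv cj f x = (\<alpha>/\<beta>) *\<^sub>R b + a"
      proof -
        have cy: "cj y = of_real \<alpha> - \<beta> *\<^sub>R I0" unfolding I0(1) pt_def
          using SA_cj[OF inv I0(2)] by (simp add: cj_add[OF inv] cj_scale[OF inv] cj_of_real[OF inv])
        show ?thesis unfolding sd cy aa using bnz by (simp add: algebra_simps of_real_def)
      qed
      have rhs: "sph_deriv cj f x * z = (\<alpha>/\<beta>) *\<^sub>R b + b * I1"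
        unfolding sd I1(1) pt_def using bnz by (simp add: algebra_simps of_real_def)
      have cond: "(cj y * sph_deriv cj f x = sph_deriv cj f x * z) = (a = b * I1)"
        unfolding lhs rhs by simp
      note C4 = core4[OF inv I0(2,3) I1(2,3,4) dCA e_def eCA]
      show "if cj y * sph_deriv cj f x = sph_deriv cj f x * z
                      then Sx cj x \<subseteq> zeros \<Omega> fg
                      else Sx cj x \<inter> zeros \<Omega> fg = {y}"
      proof (cases "a = b * I1")
        case True
        hence "Sx cj x \<subseteq> zeros \<Omega> fg" using C4 Zfg Sx by auto
        thus ?thesis using cond True by simp
      next
        case False
        hence "Sx cj x \<inter> zeros \<Omega> fg = {y}" using C4 Zfg I0(1) by simp
        thus ?thesis using cond False by simp
      qed
    qed
  qed
  show ?thesis using P1 P2 P3 by blast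
qed

end
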